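(* Consider the downlink SWIPT model described in the context with maximum ratio transmission, $\mathbf{w}_k=\hat{\mathbf{h}}_k/\sqrt{\mathbb{E}\{\|\hat{\mathbf{h}}_k\|^2\}}$ for $k=1,\dots,K$. Then for every $k$, $$E_k\ \ge\ \underline{E}^{\mathrm{MRT}}_k=\frac{T_D}{T}\eta_{\mathrm{EH}}(1-\alpha_k)\Big[\rho_{\mathrm{RF}}p^s_kM(\beta_k-e_k)+\beta_k\sum_{k'=1}^K\rho_{\mathrm{RF}}p^s_{k'}\Big],$$ and $$R^D_k\ \ge\ \underline{R}^{\mathrm{MRT},D}_k=\frac{T_D}{T}\log_2\!\Big(1+\frac{\rho_{\mathrm{RF}}p^s_k\alpha_kM(\beta_k-e_k)}{\alpha_k\beta_k\sum_{k'=1}^K\rho_{\mathrm{RF}}p^s_{k'}+\alpha_k\sigma^2_{\mathrm{RF},k}+\sigma^2_{k,s}}\Big).$$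
   Context: Let $M,K,T$ be positive integers, $\tau=K$, $T_D\ge 0$ an integer. Let $\Phi\in\mathbb{C}\setminus\{0\}$, $\rho>0$, $\sigma^2>0$, and let $\mathbf{D}$ be an $M\times M$ diagonal matrix with unit-modulus diagonal entries. For $k=1,\dots,K$: $\beta_k>0$, $p^p_k>0$; the channels $\mathbf{h}_k\sim\mathcal{CN}(\mathbf{0},\beta_k\mathbf{I}_M)$ are mutually independent; the pilot observation is $\mathbf{y}_k=\sqrt{\rho\tau p^p_k}\,\Phi\mathbf{D}\mathbf{h}_k+\mathbf{z}_k$ with $\mathbf{z}_k\sim\mathcal{CN}(\mathbf{0},\sigma^2\mathbf{I}_M)$ mutually independent and independent of the channels; the channel estimate is $$\hat{\mathbf{h}}_k=\frac{\rho\beta_k\tau p^p_k|\Phi|^2}{\rho\beta_k\tau p^p_k|\Phi|^2+\sigma^2}\mathbf{h}_k+\frac{\sqrt{\rho\tau p^p_k}\,\beta_k\Phi^*}{\rho\beta_k\tau p^p_k|\Phi|^2+\sigma^2}\mathbf{D}^H\mathbf{z}_k,$$ and $e_k=\frac{\beta_k\sigma^2}{\rho\tau p^p_k\beta_k|\Phi|^2+\sigma^2}$. Downlink parameters: $\rho_{\mathrm{RF}}>0$, SWIPT powers $p^s_k\ge0$, noise variances $\sigma^2_{\mathrm{RF},k}>0$ and $\sigma^2_{k,s}>0$, power-splitting coefficients $\alpha_k\in[0,1]$, energy conversion efficiency $\eta_{\mathrm{EH}}\in(0,1]$, and precoding vectors $\mathbf{w}_k\in\mathbb{C}^M$. Define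 the harvested energy $$E_k=\frac{T_D}{T}\eta_{\mathrm{EH}}(1-\alpha_k)\,\mathbb{E}\Big\{\Big|\mathbf{h}_k^H\sum_{k'=1}^K\sqrt{\rho_{\mathrm{RF}}p^s_{k'}}\,\mathbf{w}_{k'}\Big|^2\Big\},$$ the downlink SINR $$\mathrm{SINR}^D_k=\frac{\alpha_k\rho_{\mathrm{RF}}p^s_k|\mathbb{E}\{\mathbf{h}_k^H\mathbf{w}_k\}|^2}{\alpha_k\Big(\sum_{k'=1}^K\rho_{\mathrm{RF}}p^s_{k'}\mathbb{E}\{|\mathbf{h}_k^H\mathbf{w}_{k'}|^2\}-\rho_{\mathrm{RF}}p^s_k|\mathbb{E}\{\mathbf{h}_k^H\mathbf{w}_k\}|^2+\sigma^2_{\mathrm{RF},k}\Big)+\sigma^2_{k,s}},$$ and the downlink rate $R^D_k=\frac{T_D}{T}\log_2(1+\mathrm{SINR}^D_k)$. All expectations are over channels and pilot noise. *)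

theory Defs
  imports "HOL-Probability.Probability"
begin

text \<open>Vectors in C^M are functions nat => complex, components indexed by i < M.
  Users are indexed by k in {1..K}. Random vectors: h k omega i.\<close>

definition cinner :: "nat \<Rightarrow> (nat \<Rightarrow> complex) \<Rightarrow> (nat \<Rightarrow> complex) \<Rightarrow> complex" where
  "cinner M a b = (\<Sum>i<M. cnj (a i) * b i)"

text \<open>Real coordinates of the channels and pilot noises, used to state joint independence.\<close>
definition gauss_coords ::
  "(nat \<Rightarrow> 'a \<Rightarrow> nat \<Rightarrow> complex) \<Rightarrow> (nat \<Rightarrow> 'a \<Rightarrow> nat \<Rightarrow> complex) \<Rightarrow> nat \<times> nat \<times> nat \<Rightarrow> 'a \<Rightarrow> real" where
  "gauss_coords h z = (\<lambda>(c, k, i) \<omega>.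
     if c = 0 then Re (h k \<omega> i) else if c = 1 then Im (h k \<omega> i)
     else if c = 2 then Re (z k \<omega> i) else Im (z k \<omega> i))"

definition coord_index :: "nat \<Rightarrow> nat \<Rightarrow> (nat \<times> nat \<times> nat) set" where
  "coord_index K M = {(c, k, i). c < 4 \<and> k \<in> {1..K} \<and> i < M}"

definition chan_est ::
  "real \<Rightarrow> real \<Rightarrow> real \<Rightarrow> real \<Rightarrow> complex \<Rightarrow> real \<Rightarrow> (nat \<Rightarrow> complex)
    \<Rightarrow> (nat \<Rightarrow> complex) \<Rightarrow> (nat \<Rightarrow> complex) \<Rightarrow> nat \<Rightarrow> complex" where
  "chan_est rho tau pp beta Phi sigma2 d hk zk i =
     complex_of_real (rho * beta * tau * pp * (cmod Phi)\<^sup>2 / (rho * beta * tau * pp * (cmod Phi)\<^sup>2 + sigma2)) * hk i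
   + complex_of_real (sqrt (rho * tau * pp) * beta / (rho * beta * tau * pp * (cmod Phi)\<^sup>2 + sigma2))
       * cnj Phi * (cnj (d i) * zk i)"

definition est_err :: "real \<Rightarrow> real \<Rightarrow> real \<Rightarrow> real \<Rightarrow> complex \<Rightarrow> real \<Rightarrow> real" where
  "est_err rho tau pp beta Phi sigma2 = beta * sigma2 / (rho * tau * pp * beta * (cmod Phi)\<^sup>2 + sigma2)"

definition mrt_precoder ::
  "'a measure \<Rightarrow> nat \<Rightarrow> (nat \<Rightarrow> 'a \<Rightarrow> nat \<Rightarrow> complex) \<Rightarrow> nat \<Rightarrow> 'a \<Rightarrow> nat \<Rightarrow> complex" where
  "mrt_precoder P M hhat k \<omega> i =
     hhat k \<omega> i / complex_of_real (sqrt (integral\<^sup>L P (\<lambda>\<omega>. \<Sum>j<M. (cmod (hhat k \<omega> j))\<^sup>2)))"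

definition harvested_energy ::
  "'a measure \<Rightarrow> nat \<Rightarrow> nat \<Rightarrow> nat \<Rightarrow> nat \<Rightarrow> real \<Rightarrow> (nat \<Rightarrow> real) \<Rightarrow> real \<Rightarrow> (nat \<Rightarrow> real)
    \<Rightarrow> (nat \<Rightarrow> 'a \<Rightarrow> nat \<Rightarrow> complex) \<Rightarrow> (nat \<Rightarrow> 'a \<Rightarrow> nat \<Rightarrow> complex) \<Rightarrow> nat \<Rightarrow> real" where
  "harvested_energy P M K TD T etaEH alpha rhoRF ps h w k =
     real TD / real T * etaEH * (1 - alpha k) *
     integral\<^sup>L P (\<lambda>\<omega>. (cmod (cinner M (h k \<omega>)
        (\<lambda>i. \<Sum>k'=1..K. complex_of_real (sqrt (rhoRF * ps k')) * w k' \<omega> i)))\<^sup>2)"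

definition SINR_D ::
  "'a measure \<Rightarrow> nat \<Rightarrow> nat \<Rightarrow> (nat \<Rightarrow> real) \<Rightarrow> real \<Rightarrow> (nat \<Rightarrow> real) \<Rightarrow> (nat \<Rightarrow> real) \<Rightarrow> (nat \<Rightarrow> real)
    \<Rightarrow> (nat \<Rightarrow> 'a \<Rightarrow> nat \<Rightarrow> complex) \<Rightarrow> (nat \<Rightarrow> 'a \<Rightarrow> nat \<Rightarrow> complex) \<Rightarrow> nat \<Rightarrow> real" where
  "SINR_D P M K alpha rhoRF ps sRF ss h w k =
     (let g = (integral\<^sup>L P (\<lambda>\<omega>. cinner M (h k \<omega>) (w k \<omega>)) :: complex);
          q = (\<lambda>k'. integral\<^sup>L P (\<lambda>\<omega>. (cmod (cinner M (h k \<omega>) (w k' \<omega>)))\<^sup>2) :: real)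
      in alpha k * rhoRF * ps k * (cmod g)\<^sup>2 /
         (alpha k * ((\<Sum>k'=1..K. rhoRF * ps k' * q k') - rhoRF * ps k * (cmod g)\<^sup>2 + sRF k) + ss k))"

definition rate_D ::
  "'a measure \<Rightarrow> nat \<Rightarrow> nat \<Rightarrow> nat \<Rightarrow> nat \<Rightarrow> (nat \<Rightarrow> real) \<Rightarrow> real \<Rightarrow> (nat \<Rightarrow> real) \<Rightarrow> (nat \<Rightarrow> real)
    \<Rightarrow> (nat \<Rightarrow> real) \<Rightarrow> (nat \<Rightarrow> 'a \<Rightarrow> nat \<Rightarrow> complex) \<Rightarrow> (nat \<Rightarrow> 'a \<Rightarrow> nat \<Rightarrow> complex) \<Rightarrow> nat \<Rightarrow> real" where
  "rate_D P M K TD T alpha rhoRF ps sRF ss h w k =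
     real TD / real T * log 2 (1 + SINR_D P M K alpha rhoRF ps sRF ss h w k)"

end

theory Submission
  imports Defs
begin

lemma (in prob_space) gauss_real_moments:
  assumes s: "0 < s" and D: "distributed M lborel R (normal_density 0 s)"
  shows gauss_int: "integrable M (\<lambda>\<omega>. R \<omega> ^ n)"
    and gauss_m1: "(\<integral>\<omega>. R \<omega> \<partial>M) = 0"
    and gauss_m2: "(\<integral>\<omega>. (R \<omega>)^2 \<partial>M) = s^2"
    and gauss_m4: "(\<integral>\<omega>. (R \<omega>)^4 \<partial>M) = 3 * s^4"
proof -
  show "integrable M (\<lambda>\<omega>. R \<omega> ^ n)"
    using distributed_integrable[OF D, of "\<lambda>x. x^n"] integrable_normal_moment[OF s, of 0 n] by simp
  show "(\<integral>\<omega>. R \<omega> \<partial>M) = 0"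
    using normal_distributed_expectation[OF s D] by simp
  show "(\<integral>\<omega>. (R \<omega>)^2 \<partial>M) = s^2"
    using distributed_integral[OF D, of "\<lambda>x. x^2", symmetric] integral_normal_moment_even[OF s, of 0 1]
    by (simp add: power2_eq_square)
  show "(\<integral>\<omega>. (R \<omega>)^4 \<partial>M) = 3 * s^4"
    using distributed_integral[OF D, of "\<lambda>x. x^4", symmetric] integral_normal_moment_even[OF s, of 0 2]
    by (simp add: fact_numeral field_simps power_mult_distrib)
qed

definition cm :: "real \<Rightarrow> nat \<Rightarrow> nat \<Rightarrow> complex" where
  "cm v n m = (if n \<noteq> m then 0 else if n = 0 then 1 else if n = 1 then complex_of_real v
               else complex_of_real (2 * v^2))"

definition cmom :: "'a measure \<Rightarrow> ('i \<Rightarrow> 'a \<Rightarrow> complex) \<Rightarrow> 'i \<Rightarrow> nat \<Rightarrow> nat \<Rightarrow> complex" where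
  "cmom M X j n m = (\<integral>\<omega>. X j \<omega> ^ n * cnj (X j \<omega>) ^ m \<partial>M)"

locale cgauss = prob_space +
  fixes X :: "'i \<Rightarrow> 'a \<Rightarrow> complex" and J :: "'i set" and v :: "'i \<Rightarrow> real"
  assumes indep: "indep_vars (\<lambda>_. borel) X J"
  and integ: "\<And>j n m. j \<in> J \<Longrightarrow> n + m \<le> 4 \<Longrightarrow> integrable M (\<lambda>\<omega>. X j \<omega> ^ n * cnj (X j \<omega>) ^ m)"
  and mom: "\<And>j n m. j \<in> J \<Longrightarrow> n \<le> 2 \<Longrightarrow> m \<le> 2 \<Longrightarrow> n + m \<noteq> 3 \<Longrightarrow> cmom M X j n m = cm (v j) n m"
begin

lemma prod_moment:
  assumes S: "finite S" "S \<subseteq> J" and nm: "\<And>j. j \<in> S \<Longrightarrow> n j + m j \<le> 4"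
  shows "integrable M (\<lambda>\<omega>. \<Prod>j\<in>S. X j \<omega> ^ n j * cnj (X j \<omega>) ^ m j)"
    and "(\<integral>\<omega>. (\<Prod>j\<in>S. X j \<omega> ^ n j * cnj (X j \<omega>) ^ m j) \<partial>M) = (\<Prod>j\<in>S. cmom M X j (n j) (m j))"
proof -
  have [measurable]: "cnj \<in> borel_measurable borel"
    by (intro borel_measurable_continuous_onI continuous_intros)
  have ind: "indep_vars (\<lambda>_. borel) (\<lambda>j \<omega>. X j \<omega> ^ n j * cnj (X j \<omega>) ^ m j) S"
    by (rule indep_vars_compose2[OF indep_vars_subset[OF indep S(2)], where Y="\<lambda>j x. x ^ n j * cnj x ^ m j"]) measurable
  have int: "\<And>j. j \<in> S \<Longrightarrow> integrable M (\<lambda>\<omega>. X j \<omega> ^ n j * cnj (X j \<omega>) ^ m j)"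
    using integ nm S(2) by blast
  show "integrable M (\<lambda>\<omega>. \<Prod>j\<in>S. X j \<omega> ^ n j * cnj (X j \<omega>) ^ m j)"
    by (rule indep_vars_integrable[OF S(1) ind int])
  show "(\<integral>\<omega>. (\<Prod>j\<in>S. X j \<omega> ^ n j * cnj (X j \<omega>) ^ m j) \<partial>M) = (\<Prod>j\<in>S. cmom M X j (n j) (m j))"
    unfolding cmom_def by (rule indep_vars_lebesgue_integral[OF S(1) ind int])
qed

lemma prod_ind: "finite S \<Longrightarrow> p \<in> S \<Longrightarrow> (\<Prod>j\<in>S. (f j :: complex) ^ (if p = j then 1 else 0)) = f p"
proof -
  assume "finite S" "p \<in> S"
  have "(\<Prod>j\<in>S. f j ^ (if p = j then 1 else 0)) = (\<Prod>j\<in>S. if p = j then f j else 1)"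
    by (rule prod.cong) auto
  also have "\<dots> = f p" using \<open>finite S\<close> \<open>p \<in> S\<close> by (simp add: prod.delta)
  finally show ?thesis .
qed

definition ind :: "'i \<Rightarrow> 'i \<Rightarrow> nat" where "ind p j = (if p = j then 1 else 0)"

lemma wick:
  assumes "p \<in> J" "q \<in> J" "r \<in> J" "s \<in> J"
  shows "integrable M (\<lambda>\<omega>. X p \<omega> * cnj (X q \<omega>) * X r \<omega> * cnj (X s \<omega>))"
    and "(\<integral>\<omega>. X p \<omega> * cnj (X q \<omega>) * X r \<omega> * cnj (X s \<omega>) \<partial>M) =
          complex_of_real (v p * v r * ((if p = q \<and> r = s then 1 else 0) + (if p = s \<and> q = r then 1 else 0)))"
proof -
  let ?S = "{p,q,r,s}"
  let ?n = "\<lambda>j. ind p j + ind r j" and ?m = "\<lambda>j. ind q j + ind s j"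
  have eq: "X p \<omega> * cnj (X q \<omega>) * X r \<omega> * cnj (X s \<omega>) = (\<Prod>j\<in>?S. X j \<omega> ^ ?n j * cnj (X j \<omega>) ^ ?m j)" for \<omega>
    by (simp only: power_add prod.distrib ind_def prod_ind[of ?S] finite.intros insertI1 insertI2) (simp add: ac_simps)
  have S: "finite ?S" "?S \<subseteq> J" using assms by auto
  have nm: "\<And>j. j \<in> ?S \<Longrightarrow> ?n j + ?m j \<le> 4" by (simp add: ind_def)
  show "integrable M (\<lambda>\<omega>. X p \<omega> * cnj (X q \<omega>) * X r \<omega> * cnj (X s \<omega>))"
    unfolding eq by (rule prod_moment(1)[OF S nm])
  have "(\<integral>\<omega>. X p \<omega> * cnj (X q \<omega>) * X r \<omega> * cnj (X s \<omega>) \<partial>M) = (\<Prod>j\<in>?S. cmom M X j (?n j) (?m j))"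
    unfolding eq by (rule prod_moment(2)[OF S nm])
  also have "\<dots> = complex_of_real (v p * v r * ((if p = q \<and> r = s then 1 else 0) + (if p = s \<and> q = r then 1 else 0)))"
    using assms
    by (cases "p = q"; cases "p = r"; cases "p = s"; cases "q = r"; cases "q = s"; cases "r = s")
       (simp_all add: ind_def mom cm_def power2_eq_square prod.insert_if)
  finally show "(\<integral>\<omega>. X p \<omega> * cnj (X q \<omega>) * X r \<omega> * cnj (X s \<omega>) \<partial>M) =
          complex_of_real (v p * v r * ((if p = q \<and> r = s then 1 else 0) + (if p = s \<and> q = r then 1 else 0)))" .
qed


lemma second:
  assumes "a \<in> J" "b \<in> J"
  shows "integrable M (\<lambda>\<omega>. cnj (X a \<omega>) * X b \<omega>)"
    and "(\<integral>\<omega>. cnj (X a \<omega>) * X b \<omega> \<partial>M) = (if a = b then complex_of_real (v a) else 0)"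
proof -
  let ?S = "{a,b}"
  let ?n = "\<lambda>j. ind b j" and ?m = "\<lambda>j. ind a j"
  have eq: "cnj (X a \<omega>) * X b \<omega> = (\<Prod>j\<in>?S. X j \<omega> ^ ?n j * cnj (X j \<omega>) ^ ?m j)" for \<omega>
    by (simp only: power_add prod.distrib ind_def prod_ind[of ?S] finite.intros insertI1 insertI2) (simp add: ac_simps)
  have S: "finite ?S" "?S \<subseteq> J" using assms by auto
  have nm: "\<And>j. j \<in> ?S \<Longrightarrow> ?n j + ?m j \<le> 4" by (simp add: ind_def)
  show "integrable M (\<lambda>\<omega>. cnj (X a \<omega>) * X b \<omega>)"
    unfolding eq by (rule prod_moment(1)[OF S nm])
  have "(\<integral>\<omega>. cnj (X a \<omega>) * X b \<omega> \<partial>M) = (\<Prod>j\<in>?S. cmom M X j (?n j) (?m j))"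
    unfolding eq by (rule prod_moment(2)[OF S nm])
  also have "\<dots> = (if a = b then complex_of_real (v a) else 0)"
    using assms by (cases "a = b") (simp_all add: ind_def mom cm_def prod.insert_if)
  finally show "(\<integral>\<omega>. cnj (X a \<omega>) * X b \<omega> \<partial>M) = (if a = b then complex_of_real (v a) else 0)" .
qed

lemma quad2:
  assumes F: "finite F" and b: "\<And>m. m \<in> F \<Longrightarrow> b m \<in> J" and inj: "inj_on b F"
  shows "(\<integral>\<omega>. (cmod (\<Sum>m\<in>F. c m * X (b m) \<omega>))^2 \<partial>M) = (\<Sum>m\<in>F. (cmod (c m))^2 * v (b m))"
    and "integrable M (\<lambda>\<omega>. (cmod (\<Sum>m\<in>F. c m * X (b m) \<omega>))^2)"
proof -
  have int: "integrable M (\<lambda>\<omega>. cnj (X (b m') \<omega>) * X (b m) \<omega>)" if "m \<in> F" "m' \<in> F" for m m'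
    using second(1) b that by blast
  have "integrable M (\<lambda>\<omega>. complex_of_real ((cmod (\<Sum>m\<in>F. c m * X (b m) \<omega>))^2))"
  proof -
    have "(\<lambda>\<omega>. complex_of_real ((cmod (\<Sum>m\<in>F. c m * X (b m) \<omega>))^2)) =
          (\<lambda>\<omega>. (\<Sum>m\<in>F. \<Sum>m'\<in>F. (c m * cnj (c m')) * (cnj (X (b m') \<omega>) * X (b m) \<omega>)))"
      by (rule ext, simp only: complex_norm_square, subst sum.swap) (simp add: sum_distrib_left sum_distrib_right mult_ac)
    moreover have "integrable M (\<lambda>\<omega>. (\<Sum>m\<in>F. \<Sum>m'\<in>F. (c m * cnj (c m')) * (cnj (X (b m') \<omega>) * X (b m) \<omega>)))"
      by (auto intro!: integrable_sum integrable_mult_right int)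
    ultimately show ?thesis by simp
  qed
  then show "integrable M (\<lambda>\<omega>. (cmod (\<Sum>m\<in>F. c m * X (b m) \<omega>))^2)"
    by (simp only: complex_of_real_integrable_eq)
  have "complex_of_real (\<integral>\<omega>. (cmod (\<Sum>m\<in>F. c m * X (b m) \<omega>))^2 \<partial>M)
      = (\<integral>\<omega>. (\<Sum>m\<in>F. c m * X (b m) \<omega>) * cnj (\<Sum>m\<in>F. c m * X (b m) \<omega>) \<partial>M)"
    by (simp only: integral_complex_of_real[symmetric] complex_norm_square)
  also have "\<dots> = (\<integral>\<omega>. (\<Sum>m\<in>F. \<Sum>m'\<in>F. (c m * cnj (c m')) * (cnj (X (b m') \<omega>) * X (b m) \<omega>)) \<partial>M)"
    by (rule arg_cong[where f="integral\<^sup>L M"], rule ext, subst sum.swap) (simp add: sum_distrib_left sum_distrib_right mult_ac)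
  also have "\<dots> = (\<Sum>m\<in>F. \<Sum>m'\<in>F. (c m * cnj (c m')) * (\<integral>\<omega>. cnj (X (b m') \<omega>) * X (b m) \<omega> \<partial>M))"
    using int by (simp add: integral_sum integrable_sum)
  also have "\<dots> = (\<Sum>m\<in>F. \<Sum>m'\<in>F. if m' = m then (c m * cnj (c m)) * complex_of_real (v (b m)) else 0)"
    using b inj by (intro sum.cong refl) (auto simp: second(2) inj_on_eq_iff)
  also have "\<dots> = complex_of_real (\<Sum>m\<in>F. (cmod (c m))^2 * v (b m))"
    using F by (simp add: complex_norm_square[symmetric] mult_ac)
  finally show "(\<integral>\<omega>. (cmod (\<Sum>m\<in>F. c m * X (b m) \<omega>))^2 \<partial>M) = (\<Sum>m\<in>F. (cmod (c m))^2 * v (b m))"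
    by (simp only: of_real_eq_iff)
qed

lemma quad4:
  assumes F: "finite F" and ab: "\<And>m. m \<in> F \<Longrightarrow> a m \<in> J \<and> b m \<in> J"
    and inj: "\<And>m m'. m \<in> F \<Longrightarrow> m' \<in> F \<Longrightarrow> a m = a m' \<Longrightarrow> b m = b m' \<Longrightarrow> m = m'"
  shows "(\<integral>\<omega>. (cmod (\<Sum>m\<in>F. c m * (cnj (X (a m) \<omega>) * X (b m) \<omega>)))^2 \<partial>M)
       = (cmod (\<Sum>m\<in>F. if a m = b m then c m * complex_of_real (v (a m)) else 0))^2
         + (\<Sum>m\<in>F. (cmod (c m))^2 * v (a m) * v (b m))"
proof -
  let ?T = "\<Sum>m\<in>F. if a m = b m then c m * complex_of_real (v (a m)) else 0"
  have int: "integrable M (\<lambda>\<omega>. X (b m) \<omega> * cnj (X (a m) \<omega>) * X (a m') \<omega> * cnj (X (b m') \<omega>))"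
    if "m \<in> F" "m' \<in> F" for m m'
    using wick(1) ab that by blast
  have "complex_of_real (\<integral>\<omega>. (cmod (\<Sum>m\<in>F. c m * (cnj (X (a m) \<omega>) * X (b m) \<omega>)))^2 \<partial>M)
      = (\<integral>\<omega>. (\<Sum>m\<in>F. \<Sum>m'\<in>F. (c m * cnj (c m')) *
            (X (b m) \<omega> * cnj (X (a m) \<omega>) * X (a m') \<omega> * cnj (X (b m') \<omega>))) \<partial>M)"
    apply (simp only: integral_complex_of_real[symmetric] complex_norm_square)
    by (rule arg_cong[where f="integral\<^sup>L M"], rule ext, subst sum.swap) (simp add: sum_distrib_left sum_distrib_right mult_ac)
  also have "\<dots> = (\<Sum>m\<in>F. \<Sum>m'\<in>F. (c m * cnj (c m')) *
            (\<integral>\<omega>. X (b m) \<omega> * cnj (X (a m) \<omega>) * X (a m') \<omega> * cnj (X (b m') \<omega>) \<partial>M))"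
    using int by (simp add: integral_sum integrable_sum)
  also have "\<dots> = (\<Sum>m\<in>F. \<Sum>m'\<in>F. (if a m = b m then c m * complex_of_real (v (a m)) else 0) *
                       cnj (if a m' = b m' then c m' * complex_of_real (v (a m')) else 0)
                  + (if m' = m then (c m * cnj (c m)) * complex_of_real (v (a m) * v (b m)) else 0))"
  proof (intro sum.cong refl)
    fix m m' assume mm: "m \<in> F" "m' \<in> F"
    show "(c m * cnj (c m')) * (\<integral>\<omega>. X (b m) \<omega> * cnj (X (a m) \<omega>) * X (a m') \<omega> * cnj (X (b m') \<omega>) \<partial>M)
       = (if a m = b m then c m * complex_of_real (v (a m)) else 0) *
                       cnj (if a m' = b m' then c m' * complex_of_real (v (a m')) else 0)
                  + (if m' = m then (c m * cnj (c m)) * complex_of_real (v (a m) * v (b m)) else 0)"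
      using ab[OF mm(1)] ab[OF mm(2)] inj[OF mm] inj[OF mm(2,1)]
      by (subst wick(2)) (auto simp: algebra_simps)
  qed
  also have "\<dots> = ?T * cnj ?T + (\<Sum>m\<in>F. \<Sum>m'\<in>F. (if m' = m then (c m * cnj (c m)) * complex_of_real (v (a m) * v (b m)) else 0))"
    by (simp only: cnj_sum sum_product sum.distrib)
  also have "\<dots> = ?T * cnj ?T + complex_of_real (\<Sum>m\<in>F. (cmod (c m))^2 * v (a m) * v (b m))"
    using F by (simp add: complex_norm_square[symmetric] mult_ac)
  also have "\<dots> = complex_of_real ((cmod ?T)^2 + (\<Sum>m\<in>F. (cmod (c m))^2 * v (a m) * v (b m)))"
    by (simp only: of_real_add complex_norm_square)
  finally show ?thesis by (simp only: of_real_eq_iff)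
qed

end

lemma borel_measurable_cnj'[measurable (raw)]:
  assumes "f \<in> borel_measurable M" shows "(\<lambda>x. cnj (f x)) \<in> borel_measurable M"
proof -
  have "cnj \<in> borel_measurable borel" by (intro borel_measurable_continuous_onI continuous_intros)
  from measurable_compose[OF assms this] show ?thesis .
qed

lemma integral_Complex:
  assumes "integrable M f" "integrable M g"
  shows "(\<integral>\<omega>. Complex (f \<omega>) (g \<omega>) \<partial>M) = Complex (\<integral>\<omega>. f \<omega> \<partial>M) (\<integral>\<omega>. g \<omega> \<partial>M)"
proof -
  have "(\<integral>\<omega>. Complex (f \<omega>) (g \<omega>) \<partial>M) = (\<integral>\<omega>. complex_of_real (f \<omega>) + \<i> * complex_of_real (g \<omega>) \<partial>M)"
    by (rule arg_cong[where f="integral\<^sup>L M"]) (simp add: fun_eq_iff complex_eq_iff)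
  also have "\<dots> = complex_of_real (\<integral>\<omega>. f \<omega> \<partial>M) + \<i> * complex_of_real (\<integral>\<omega>. g \<omega> \<partial>M)"
    using assms by (simp add: complex_of_real_integrable_eq)
  also have "\<dots> = Complex (\<integral>\<omega>. f \<omega> \<partial>M) (\<integral>\<omega>. g \<omega> \<partial>M)"
    by (simp add: complex_eq_iff)
  finally show ?thesis .
qed

lemma (in prob_space) indep_pair_integral:
  assumes ind: "indep_vars (\<lambda>_. borel) G {a,b}" and ab: "a \<noteq> b"
    and f[measurable]: "f \<in> borel_measurable borel" and g[measurable]: "g \<in> borel_measurable borel"
    and fi: "integrable M (\<lambda>\<omega>. f (G a \<omega>) :: real)" and gi: "integrable M (\<lambda>\<omega>. g (G b \<omega>) :: real)"
  shows "(\<integral>\<omega>. f (G a \<omega>) * g (G b \<omega>) \<partial>M) = (\<integral>\<omega>. f (G a \<omega>) \<partial>M) * (\<integral>\<omega>. g (G b \<omega>) \<partial>M)"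
    and "integrable M (\<lambda>\<omega>. f (G a \<omega>) * g (G b \<omega>))"
proof -
  let ?Y = "\<lambda>i x. if i = a then f x else g x"
  have ind2: "indep_vars (\<lambda>_. borel) (\<lambda>i \<omega>. ?Y i (G i \<omega>)) {a,b}"
    by (rule indep_vars_compose2[OF ind]) auto
  have int: "\<And>i. i \<in> {a,b} \<Longrightarrow> integrable M (\<lambda>\<omega>. ?Y i (G i \<omega>))"
    using fi gi ab by auto
  have "(\<integral>\<omega>. (\<Prod>i\<in>{a,b}. ?Y i (G i \<omega>)) \<partial>M) = (\<Prod>i\<in>{a,b}. \<integral>\<omega>. ?Y i (G i \<omega>) \<partial>M)"
    by (rule indep_vars_lebesgue_integral[OF _ ind2 int]) auto
  then show "(\<integral>\<omega>. f (G a \<omega>) * g (G b \<omega>) \<partial>M) = (\<integral>\<omega>. f (G a \<omega>) \<partial>M) * (\<integral>\<omega>. g (G b \<omega>) \<partial>M)"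
    using ab by simp
  have "integrable M (\<lambda>\<omega>. (\<Prod>i\<in>{a,b}. ?Y i (G i \<omega>)))"
    by (rule indep_vars_integrable[OF _ ind2 int]) auto
  then show "integrable M (\<lambda>\<omega>. f (G a \<omega>) * g (G b \<omega>))"
    using ab by simp
qed

lemma (in prob_space) cgauss_single:
  assumes s: "0 < s" and ab: "a \<noteq> b" and ind: "indep_vars (\<lambda>_. borel) G {a,b}"
    and Da: "distributed M lborel (G a) (normal_density 0 s)"
    and Db: "distributed M lborel (G b) (normal_density 0 s)"
  shows cgauss_int: "n + m \<le> 4 \<Longrightarrow> integrable M (\<lambda>\<omega>. Complex (G a \<omega>) (G b \<omega>) ^ n * cnj (Complex (G a \<omega>) (G b \<omega>)) ^ m)"
    and cgauss_mom: "n \<le> 2 \<Longrightarrow> m \<le> 2 \<Longrightarrow> n + m \<noteq> 3 \<Longrightarrow>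
        cmom M (\<lambda>_ \<omega>. Complex (G a \<omega>) (G b \<omega>)) j n m = cm (2 * s^2) n m"
proof -
  have [measurable]: "G a \<in> borel_measurable M" "G b \<in> borel_measurable M"
    using ind by (auto simp: indep_vars_def)
  note ia = gauss_int[OF s Da] and ib = gauss_int[OF s Db]
  define R where "R = G a"
  define I where "I = G b"
  have [measurable]: "R \<in> borel_measurable M" "I \<in> borel_measurable M" by (auto simp: R_def I_def)
  have iR: "integrable M (\<lambda>\<omega>. R \<omega> ^ n)" for n using ia by (simp add: R_def)
  have iI: "integrable M (\<lambda>\<omega>. I \<omega> ^ n)" for n using ib by (simp add: I_def)
  have prodRI: "(\<integral>\<omega>. R \<omega> ^ p * I \<omega> ^ q \<partial>M) = (\<integral>\<omega>. R \<omega> ^ p \<partial>M) * (\<integral>\<omega>. I \<omega> ^ q \<partial>M)"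
     and iRI: "integrable M (\<lambda>\<omega>. R \<omega> ^ p * I \<omega> ^ q)" for p q
    using indep_pair_integral[OF ind ab, of "\<lambda>x. x^p" "\<lambda>x. x^q"] ia ib by (auto simp: R_def I_def)
  have m1R: "(\<integral>\<omega>. R \<omega> \<partial>M) = 0" and m1I: "(\<integral>\<omega>. I \<omega> \<partial>M) = 0"
    using gauss_m1[OF s Da] gauss_m1[OF s Db] by (auto simp: R_def I_def)
  have m2R: "(\<integral>\<omega>. (R \<omega>)^2 \<partial>M) = s^2" and m2I: "(\<integral>\<omega>. (I \<omega>)^2 \<partial>M) = s^2"
    using gauss_m2[OF s Da] gauss_m2[OF s Db] by (auto simp: R_def I_def)
  have m4R: "(\<integral>\<omega>. (R \<omega>)^4 \<partial>M) = 3 * s^4" and m4I: "(\<integral>\<omega>. (I \<omega>)^4 \<partial>M) = 3 * s^4"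
    using gauss_m4[OF s Da] gauss_m4[OF s Db] by (auto simp: R_def I_def)
  have RI0: "(\<integral>\<omega>. R \<omega> * I \<omega> \<partial>M) = 0" using prodRI[of 1 1] m1R by simp
  let ?Z = "\<lambda>\<omega>. Complex (R \<omega>) (I \<omega>)"
  have [measurable]: "?Z \<in> borel_measurable M"
  proof -
    have "?Z = (\<lambda>\<omega>. complex_of_real (R \<omega>) + \<i> * complex_of_real (I \<omega>))"
      by (simp add: fun_eq_iff complex_eq_iff)
    then show ?thesis by simp
  qed
  show "n + m \<le> 4 \<Longrightarrow> integrable M (\<lambda>\<omega>. Complex (G a \<omega>) (G b \<omega>) ^ n * cnj (Complex (G a \<omega>) (G b \<omega>)) ^ m)"
  proof -
    assume nm: "n + m \<le> 4"
    have bi: "integrable M (\<lambda>\<omega>. 1 + 2 * R \<omega> ^ 4 + 2 * I \<omega> ^ 4)"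
      using iR iI by auto
    have "integrable M (\<lambda>\<omega>. ?Z \<omega> ^ n * cnj (?Z \<omega>) ^ m)"
    proof (rule Bochner_Integration.integrable_bound[OF bi])
      show "(\<lambda>\<omega>. ?Z \<omega> ^ n * cnj (?Z \<omega>) ^ m) \<in> borel_measurable M" by measurable
      show "AE \<omega> in M. norm (?Z \<omega> ^ n * cnj (?Z \<omega>) ^ m) \<le> norm (1 + 2 * R \<omega> ^ 4 + 2 * I \<omega> ^ 4)"
      proof (rule AE_I2)
        fix \<omega>
        let ?c = "cmod (?Z \<omega>)"
        have c2: "?c^2 = R \<omega>^2 + I \<omega>^2" by (simp add: cmod_def)
        have "norm (?Z \<omega> ^ n * cnj (?Z \<omega>) ^ m) = ?c ^ (n + m)"
          by (simp add: norm_mult norm_power power_add)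
        also have "\<dots> \<le> 1 + ?c ^ 4"
        proof (cases "?c \<le> 1")
          case True then have "?c ^ (n+m) \<le> 1" by (simp add: power_le_one)
          moreover have "0 \<le> ?c ^ 4" by simp
          ultimately show ?thesis by linarith
        next
          case False then have "?c ^ (n+m) \<le> ?c ^ 4" using nm by (intro power_increasing) auto
          then show ?thesis by linarith
        qed
        also have "?c ^ 4 = (R \<omega>^2 + I \<omega>^2)^2" unfolding c2[symmetric] by (simp flip: power_mult)
        also have "(R \<omega>^2 + I \<omega>^2)^2 = 2 * R \<omega> ^ 4 + 2 * I \<omega> ^ 4 - (R \<omega>^2 - I \<omega>^2)^2"
          by algebra
        also have "\<dots> \<le> 2 * R \<omega> ^ 4 + 2 * I \<omega> ^ 4" by simp
        finally show "norm (?Z \<omega> ^ n * cnj (?Z \<omega>) ^ m) \<le> norm (1 + 2 * R \<omega> ^ 4 + 2 * I \<omega> ^ 4)"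
          by simp
      qed
    qed
    then show ?thesis by (simp add: R_def I_def)
  qed
  show "n \<le> 2 \<Longrightarrow> m \<le> 2 \<Longrightarrow> n + m \<noteq> 3 \<Longrightarrow>
        cmom M (\<lambda>_ \<omega>. Complex (G a \<omega>) (G b \<omega>)) j n m = cm (2 * s^2) n m"
  proof -
    assume n: "n \<le> 2" and m: "m \<le> 2" and nm: "n + m \<noteq> 3"
    have cases: "(n = 0 \<and> m = 0) \<or> (n = 1 \<and> m = 0) \<or> (n = 0 \<and> m = 1) \<or> (n = 1 \<and> m = 1)
       \<or> (n = 2 \<and> m = 0) \<or> (n = 0 \<and> m = 2) \<or> (n = 2 \<and> m = 2)" using n m nm by auto
    have "(\<integral>\<omega>. ?Z \<omega> ^ n * cnj (?Z \<omega>) ^ m \<partial>M) = cm (2 * s^2) n m"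
      using cases
    proof (elim disjE conjE)
      assume "n = 0" "m = 0" then show ?thesis by (simp add: cm_def prob_space)
    next
      assume "n = 1" "m = 0"
      then show ?thesis using iR[of 1] iI[of 1] by (simp add: cm_def integral_Complex m1R m1I complex_eq_iff)
    next
      assume "n = 0" "m = 1"
      then show ?thesis using iR[of 1] iI[of 1] by (simp add: cm_def integral_Complex m1R m1I complex_eq_iff)
    next
      assume "n = 1" "m = 1"
      have e: "?Z \<omega> ^ 1 * cnj (?Z \<omega>) ^ 1 = complex_of_real (R \<omega>^2 + I \<omega>^2)" for \<omega>
        by (simp add: complex_eq_iff power2_eq_square)
      have "(\<integral>\<omega>. ?Z \<omega> ^ n * cnj (?Z \<omega>) ^ m \<partial>M) = complex_of_real (\<integral>\<omega>. R \<omega>^2 + I \<omega>^2 \<partial>M)"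
        unfolding \<open>n = 1\<close> \<open>m = 1\<close> e by (rule integral_complex_of_real)
      also have "(\<integral>\<omega>. R \<omega>^2 + I \<omega>^2 \<partial>M) = 2 * s^2"
        using iR[of 2] iI[of 2] by (simp add: m2R m2I)
      finally show ?thesis using \<open>n = 1\<close> \<open>m = 1\<close> by (simp add: cm_def)
    next
      assume "n = 2" "m = 0"
      have e: "?Z \<omega> ^ 2 * cnj (?Z \<omega>) ^ 0 = Complex (R \<omega>^2 - I \<omega>^2) (2 * (R \<omega> ^ 1 * I \<omega> ^ 1))" for \<omega>
        by (simp add: complex_eq_iff power2_eq_square)
      have "(\<integral>\<omega>. ?Z \<omega> ^ n * cnj (?Z \<omega>) ^ m \<partial>M) =
          Complex (\<integral>\<omega>. R \<omega>^2 - I \<omega>^2 \<partial>M) (\<integral>\<omega>. 2 * (R \<omega> ^ 1 * I \<omega> ^ 1) \<partial>M)"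
        unfolding \<open>n = 2\<close> \<open>m = 0\<close> e using iR[of 2] iI[of 2] iRI[of 1 1]
        by (intro integral_Complex) auto
      also have "\<dots> = 0"
        using iR[of 2] iI[of 2] iRI[of 1 1] by (simp add: m2R m2I RI0 complex_eq_iff)
      finally show ?thesis using \<open>n = 2\<close> \<open>m = 0\<close> by (simp add: cm_def)
    next
      assume "n = 0" "m = 2"
      have e: "?Z \<omega> ^ 0 * cnj (?Z \<omega>) ^ 2 = Complex (R \<omega>^2 - I \<omega>^2) (- (2 * (R \<omega> ^ 1 * I \<omega> ^ 1)))" for \<omega>
        by (simp add: complex_eq_iff power2_eq_square)
      have "(\<integral>\<omega>. ?Z \<omega> ^ n * cnj (?Z \<omega>) ^ m \<partial>M) =
          Complex (\<integral>\<omega>. R \<omega>^2 - I \<omega>^2 \<partial>M) (\<integral>\<omega>. - (2 * (R \<omega> ^ 1 * I \<omega> ^ 1)) \<partial>M)"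
        unfolding \<open>n = 0\<close> \<open>m = 2\<close> e using iR[of 2] iI[of 2] iRI[of 1 1]
        by (intro integral_Complex) auto
      also have "\<dots> = 0"
        using iR[of 2] iI[of 2] iRI[of 1 1] by (simp add: m2R m2I RI0 complex_eq_iff)
      finally show ?thesis using \<open>n = 0\<close> \<open>m = 2\<close> by (simp add: cm_def)
    next
      assume "n = 2" "m = 2"
      have e: "?Z \<omega> ^ 2 * cnj (?Z \<omega>) ^ 2 = complex_of_real (R \<omega>^4 + 2 * (R \<omega>^2 * I \<omega>^2) + I \<omega>^4)" for \<omega>
      proof -
        have "?Z \<omega> ^ 2 * cnj (?Z \<omega>) ^ 2 = (?Z \<omega> * cnj (?Z \<omega>))^2" by (simp add: power_mult_distrib)
        also have "?Z \<omega> * cnj (?Z \<omega>) = complex_of_real (R \<omega>^2 + I \<omega>^2)"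
          by (simp add: complex_eq_iff power2_eq_square)
        also have "(complex_of_real (R \<omega>^2 + I \<omega>^2))^2 = complex_of_real ((R \<omega>^2 + I \<omega>^2)^2)"
          by simp
        also have "(R \<omega>^2 + I \<omega>^2)^2 = R \<omega>^4 + 2 * (R \<omega>^2 * I \<omega>^2) + I \<omega>^4" by algebra
        finally show ?thesis .
      qed
      have "(\<integral>\<omega>. ?Z \<omega> ^ n * cnj (?Z \<omega>) ^ m \<partial>M) = complex_of_real (\<integral>\<omega>. R \<omega>^4 + 2 * (R \<omega>^2 * I \<omega>^2) + I \<omega>^4 \<partial>M)"
        unfolding \<open>n = 2\<close> \<open>m = 2\<close> e by (rule integral_complex_of_real)
      also have "(\<integral>\<omega>. R \<omega>^4 + 2 * (R \<omega>^2 * I \<omega>^2) + I \<omega>^4 \<partial>M) = 8 * s^4"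
        using iR[of 4] iI[of 4] iRI[of 2 2] by (simp add: prodRI m2R m2I m4R m4I)
      finally show ?thesis using \<open>n = 2\<close> \<open>m = 2\<close> by (simp add: cm_def power_mult_distrib)
    qed
    then show ?thesis by (simp add: cmom_def R_def I_def)
  qed
qed

definition Xc :: "(nat \<Rightarrow> 'a \<Rightarrow> nat \<Rightarrow> complex) \<Rightarrow> (nat \<Rightarrow> 'a \<Rightarrow> nat \<Rightarrow> complex) \<Rightarrow> nat \<times> nat \<times> nat \<Rightarrow> 'a \<Rightarrow> complex" where
  "Xc h z j \<omega> = (case j of (t, k, i) \<Rightarrow> if t = 0 then h k \<omega> i else z k \<omega> i)"

definition JJ :: "nat \<Rightarrow> nat \<Rightarrow> (nat \<times> nat \<times> nat) set" where
  "JJ K M = {0, 1} \<times> {1..K} \<times> {..<M}"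

definition vv :: "(nat \<Rightarrow> real) \<Rightarrow> real \<Rightarrow> nat \<times> nat \<times> nat \<Rightarrow> real" where
  "vv beta sigma2 j = (case j of (t, k, i) \<Rightarrow> if t = 0 then beta k else sigma2)"

definition Kf :: "nat \<times> nat \<times> nat \<Rightarrow> (nat \<times> nat \<times> nat) set" where
  "Kf j = (case j of (t, k, i) \<Rightarrow> {(2*t, k, i), (2*t+1, k, i)})"

definition Yf :: "nat \<times> nat \<times> nat \<Rightarrow> (nat \<times> nat \<times> nat \<Rightarrow> real) \<Rightarrow> complex" where
  "Yf j f = (case j of (t, k, i) \<Rightarrow> Complex (f (2*t, k, i)) (f (2*t+1, k, i)))"

lemma Xc_eq:
  assumes "j \<in> JJ K M"
  shows "Xc h z j \<omega> = Yf j (\<lambda>c. gauss_coords h z c \<omega>)"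
  using assms by (auto simp: Xc_def Yf_def JJ_def gauss_coords_def)

lemma cgauss_inst:
  assumes P: "prob_space P" and s2: "sigma2 > 0" and b: "\<forall>k\<in>{1..K}. beta k > 0"
    and D: "\<forall>k\<in>{1..K}. \<forall>i<M.
           distributed P lborel (\<lambda>\<omega>. Re (h k \<omega> i)) (normal_density 0 (sqrt (beta k / 2))) \<and>
           distributed P lborel (\<lambda>\<omega>. Im (h k \<omega> i)) (normal_density 0 (sqrt (beta k / 2))) \<and>
           distributed P lborel (\<lambda>\<omega>. Re (z k \<omega> i)) (normal_density 0 (sqrt (sigma2 / 2))) \<and>
           distributed P lborel (\<lambda>\<omega>. Im (z k \<omega> i)) (normal_density 0 (sqrt (sigma2 / 2)))"
    and ind: "prob_space.indep_vars P (\<lambda>_. borel) (gauss_coords h z) (coord_index K M)"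
  shows "cgauss P (Xc h z) (JJ K M) (vv beta sigma2)"
proof -
  interpret prob_space P by (rule P)
  have sub: "Kf j \<subseteq> coord_index K M" if "j \<in> JJ K M" for j
    using that by (auto simp: Kf_def JJ_def coord_index_def)
  have disj: "disjoint_family_on Kf (JJ K M)"
    by (auto simp: disjoint_family_on_def Kf_def JJ_def)
  have r: "indep_vars (\<lambda>j. PiM (Kf j) (\<lambda>_. borel)) (\<lambda>j \<omega>. restrict (\<lambda>c. gauss_coords h z c \<omega>) (Kf j)) (JJ K M)"
    by (rule indep_vars_restrict[OF ind sub disj])
  have meas: "Yf j \<in> measurable (PiM (Kf j) (\<lambda>_. borel)) borel" if "j \<in> JJ K M" for j
  proof -
    obtain t k i where j: "j = (t, k, i)" by (cases j) auto
    have "Yf j = (\<lambda>f. complex_of_real (f (2*t, k, i)) + \<i> * complex_of_real (f (2*t+1, k, i)))"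
      by (simp add: fun_eq_iff j Yf_def complex_eq_iff)
    moreover have "(2*t, k, i) \<in> Kf j" "(2*t+1, k, i) \<in> Kf j" by (auto simp: j Kf_def)
    ultimately show ?thesis by simp
  qed
  have c: "indep_vars (\<lambda>_. borel) (\<lambda>j \<omega>. Yf j (restrict (\<lambda>c. gauss_coords h z c \<omega>) (Kf j))) (JJ K M)"
    by (rule indep_vars_compose2[OF r meas])
  have "indep_vars (\<lambda>_. borel) (Xc h z) (JJ K M)"
  proof -
    have "Yf j (restrict (\<lambda>c. gauss_coords h z c \<omega>) (Kf j)) = Xc h z j \<omega>" if "j \<in> JJ K M" for j \<omega>
      using that by (auto simp: Xc_eq Yf_def Kf_def JJ_def)
    then show ?thesis using c by (subst indep_vars_cong[of _ _ _ "\<lambda>j \<omega>. Yf j (restrict (\<lambda>c. gauss_coords h z c \<omega>) (Kf j))"]) (auto simp: fun_eq_iff)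
  qed
  moreover
  have single: "(\<forall>n m. n + m \<le> 4 \<longrightarrow> integrable P (\<lambda>\<omega>. Xc h z j \<omega> ^ n * cnj (Xc h z j \<omega>) ^ m)) \<and>
      (\<forall>n m. n \<le> 2 \<longrightarrow> m \<le> 2 \<longrightarrow> n + m \<noteq> 3 \<longrightarrow> cmom P (Xc h z) j n m = cm (vv beta sigma2 j) n m)"
    if j: "j \<in> JJ K M" for j
  proof -
    obtain t k i where jj: "j = (t, k, i)" by (cases j) auto
    have tki: "t \<in> {0,1}" "k \<in> {1..K}" "i < M" using j by (auto simp: jj JJ_def)
    define a where "a = (2*t, k, i)"
    define b where "b = (2*t+1, k, i)"
    have ab: "a \<noteq> b" by (simp add: a_def b_def)
    have ind2: "indep_vars (\<lambda>_. borel) (gauss_coords h z) {a, b}"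
      by (rule indep_vars_subset[OF ind]) (use tki in \<open>auto simp: a_def b_def coord_index_def\<close>)
    define s where "s = sqrt (vv beta sigma2 j / 2)"
    have vpos: "vv beta sigma2 j > 0" using b s2 tki by (auto simp: vv_def jj)
    then have s: "s > 0" by (simp add: s_def)
    have vs: "2 * s^2 = vv beta sigma2 j" using vpos by (simp add: s_def)
    have Da: "distributed P lborel (gauss_coords h z a) (normal_density 0 s)"
     and Db: "distributed P lborel (gauss_coords h z b) (normal_density 0 s)"
      using D tki by (auto simp: a_def b_def s_def vv_def jj gauss_coords_def)
    have X: "Xc h z j = (\<lambda>\<omega>. Complex (gauss_coords h z a \<omega>) (gauss_coords h z b \<omega>))"
      using tki by (auto simp: fun_eq_iff Xc_def jj a_def b_def gauss_coords_def)
    have cm_eq: "cmom P (Xc h z) j n m = cmom P (\<lambda>_ \<omega>. Complex (gauss_coords h z a \<omega>) (gauss_coords h z b \<omega>)) j n m" for n m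
      by (simp add: cmom_def X)
    show ?thesis
      using cgauss_int[OF s ab ind2 Da Db] cgauss_mom[OF s ab ind2 Da Db] unfolding cm_eq vs X by auto
  qed
  ultimately show ?thesis
    unfolding cgauss_def cgauss_axioms_def using P by blast
qed

locale swipt =
  fixes P :: "'a measure" and M K :: nat and Phi :: complex and rho sigma2 :: real
    and d :: "nat \<Rightarrow> complex" and beta pp :: "nat \<Rightarrow> real"
    and h z :: "nat \<Rightarrow> 'a \<Rightarrow> nat \<Rightarrow> complex"
  assumes P: "prob_space P" and Mpos: "M > 0" and Kpos: "K > 0" and Phi: "Phi \<noteq> 0"
    and rho: "rho > 0" and s2: "sigma2 > 0"
    and dd: "\<forall>i<M. cmod (d i) = 1"
    and bp: "\<forall>k\<in>{1..K}. beta k > 0 \<and> pp k > 0"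
    and D: "\<forall>k\<in>{1..K}. \<forall>i<M.
           distributed P lborel (\<lambda>\<omega>. Re (h k \<omega> i)) (normal_density 0 (sqrt (beta k / 2))) \<and>
           distributed P lborel (\<lambda>\<omega>. Im (h k \<omega> i)) (normal_density 0 (sqrt (beta k / 2))) \<and>
           distributed P lborel (\<lambda>\<omega>. Re (z k \<omega> i)) (normal_density 0 (sqrt (sigma2 / 2))) \<and>
           distributed P lborel (\<lambda>\<omega>. Im (z k \<omega> i)) (normal_density 0 (sqrt (sigma2 / 2)))"
    and ind: "prob_space.indep_vars P (\<lambda>_. borel) (gauss_coords h z) (coord_index K M)"
begin

sublocale cg: cgauss P "Xc h z" "JJ K M" "vv beta sigma2"
  using cgauss_inst[OF P s2 _ D ind] bp by auto

definition "tau = real K"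
definition "cc k = rho * beta k * tau * pp k * (cmod Phi)^2"
definition "A k = cc k / (cc k + sigma2)"
definition "Bc k = complex_of_real (sqrt (rho * tau * pp k) * beta k / (cc k + sigma2)) * cnj Phi"
definition "ee k = est_err rho tau (pp k) (beta k) Phi sigma2"
definition "hhat = (\<lambda>k' \<omega>. chan_est rho tau (pp k') (beta k') Phi sigma2 d (h k' \<omega>) (z k' \<omega>))"
definition "w = mrt_precoder P M hhat"
definition "NN k = sqrt (real M * (beta k - ee k))"

lemma cc_pos: "k \<in> {1..K} \<Longrightarrow> cc k > 0"
  using bp rho Phi Kpos by (auto simp: cc_def tau_def)

lemma ee_eq: "k \<in> {1..K} \<Longrightarrow> beta k - ee k = A k * beta k"
  using cc_pos[of k] s2
  by (simp add: ee_def est_err_def A_def cc_def field_simps)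

lemma be_pos: "k \<in> {1..K} \<Longrightarrow> beta k - ee k > 0"
  using cc_pos[of k] s2 bp by (simp add: ee_eq A_def)

lemma var_eq: "k \<in> {1..K} \<Longrightarrow> (A k)^2 * beta k + (cmod (Bc k))^2 * sigma2 = beta k - ee k"
proof -
  assume k: "k \<in> {1..K}"
  have c: "cc k > 0" using cc_pos[OF k] .
  have t: "tau > 0" using Kpos by (simp add: tau_def)
  have pb: "pp k > 0" "beta k > 0" using bp k by auto
  have "(cmod (Bc k))^2 = rho * tau * pp k * (beta k)^2 * (cmod Phi)^2 / (cc k + sigma2)^2"
  proof -
    have "cmod (Bc k) = \<bar>sqrt (rho * tau * pp k) * beta k / (cc k + sigma2)\<bar> * cmod Phi"
      unfolding Bc_def by (simp only: norm_mult norm_of_real complex_mod_cnj)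
    also have "\<bar>sqrt (rho * tau * pp k) * beta k / (cc k + sigma2)\<bar> = sqrt (rho * tau * pp k) * beta k / (cc k + sigma2)"
      using c s2 pb rho t by (intro abs_of_nonneg) simp
    finally show ?thesis using rho t pb by (simp add: power_mult_distrib power_divide)
  qed
  also have "\<dots> = beta k * cc k / (cc k + sigma2)^2" by (simp add: cc_def power2_eq_square mult_ac)
  finally have "(cmod (Bc k))^2 = beta k * cc k / (cc k + sigma2)^2" .
  moreover have "(x / q)^2 * b + b * x / q^2 * (q - x) = x / q * b" if "q \<noteq> 0" for x q b :: real
    using that by (simp add: field_simps power2_eq_square)
  ultimately show ?thesis using c s2 unfolding ee_eq[OF k] A_def
    by (metis add_diff_cancel_left' add_pos_pos less_irrefl)
qed

lemma hhat_eq: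
  assumes "k \<in> {1..K}" "i < M"
  shows "hhat k \<omega> i = (\<Sum>t\<in>{0,1}. (if t = 0 then complex_of_real (A k) else Bc k * cnj (d i)) * Xc h z (t, k, i) \<omega>)"
  by (simp add: hhat_def chan_est_def A_def Bc_def cc_def Xc_def mult_ac)

lemma hhat_var:
  assumes k: "k \<in> {1..K}" and i: "i < M"
  shows "(\<integral>\<omega>. (cmod (hhat k \<omega> i))^2 \<partial>P) = beta k - ee k"
    and "integrable P (\<lambda>\<omega>. (cmod (hhat k \<omega> i))^2)"
proof -
  let ?c = "\<lambda>t. if t = 0 then complex_of_real (A k) else Bc k * cnj (d i)"
  have inj: "inj_on (\<lambda>t. (t, k, i)) {0, 1::nat}" by (auto simp: inj_on_def)
  have J: "\<And>t. t \<in> {0, 1::nat} \<Longrightarrow> (t, k, i) \<in> JJ K M" using k i by (auto simp: JJ_def)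
  have "(\<integral>\<omega>. (cmod (hhat k \<omega> i))^2 \<partial>P) = (\<Sum>t\<in>{0,1}. (cmod (?c t))^2 * vv beta sigma2 (t, k, i))"
    unfolding hhat_eq[OF k i] by (rule cg.quad2(1)[OF _ J inj]) auto
  also have "\<dots> = beta k - ee k"
    using var_eq[OF k] dd i by (simp add: vv_def norm_mult)
  finally show "(\<integral>\<omega>. (cmod (hhat k \<omega> i))^2 \<partial>P) = beta k - ee k" .
  show "integrable P (\<lambda>\<omega>. (cmod (hhat k \<omega> i))^2)"
    unfolding hhat_eq[OF k i] by (rule cg.quad2(2)[OF _ J inj]) auto
qed

lemma norm_hhat:
  assumes k: "k \<in> {1..K}"
  shows "sqrt (\<integral>\<omega>. (\<Sum>j<M. (cmod (hhat k \<omega> j))\<^sup>2) \<partial>P) = NN k"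
proof -
  have "(\<integral>\<omega>. (\<Sum>j<M. (cmod (hhat k \<omega> j))\<^sup>2) \<partial>P) = (\<Sum>j<M. \<integral>\<omega>. (cmod (hhat k \<omega> j))\<^sup>2 \<partial>P)"
    using hhat_var(2)[OF k] by (simp add: integral_sum)
  also have "\<dots> = real M * (beta k - ee k)" using hhat_var(1)[OF k] by simp
  finally show ?thesis by (simp add: NN_def)
qed

lemma NN_pos: "k \<in> {1..K} \<Longrightarrow> NN k > 0"
  using be_pos Mpos by (simp add: NN_def)

lemma w_eq: "k \<in> {1..K} \<Longrightarrow> w k \<omega> i = hhat k \<omega> i / complex_of_real (NN k)"
  by (simp add: w_def mrt_precoder_def norm_hhat)


lemma sum_F: "(\<Sum>m\<in>{..<M} \<times> {1..K} \<times> {0,1::nat}. (f m :: 'b::comm_monoid_add)) = (\<Sum>i<M. \<Sum>k'\<in>{1..K::nat}. f (i,k',0) + f (i,k',1))"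
  by (simp add: sum.cartesian_product')

lemma energy_formula:
  assumes k: "k \<in> {1..K}"
  shows "(\<integral>\<omega>. (cmod (cinner M (h k \<omega>) (\<lambda>i. \<Sum>k'=1..K. complex_of_real (s k') * w k' \<omega> i)))\<^sup>2 \<partial>P)
       = real M * (s k)^2 * (beta k - ee k) + beta k * (\<Sum>k'=1..K. (s k')^2)"
proof -
  define F where "F = {..<M} \<times> {1..K} \<times> {0,1::nat}"
  define a where "a = (\<lambda>(i::nat, k'::nat, t::nat). (0::nat, k, i))"
  define b where "b = (\<lambda>(i::nat, k'::nat, t::nat). (t, k', i))"
  define c where "c = (\<lambda>(i::nat, k'::nat, t::nat). complex_of_real (s k' / NN k') *
                       (if t = 0 then complex_of_real (A k') else Bc k' * cnj (d i)))"
  have ab: "\<And>m. m \<in> F \<Longrightarrow> a m \<in> JJ K M \<and> b m \<in> JJ K M"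
    using k by (auto simp: F_def a_def b_def JJ_def)
  have inj: "\<And>m m'. m \<in> F \<Longrightarrow> m' \<in> F \<Longrightarrow> a m = a m' \<Longrightarrow> b m = b m' \<Longrightarrow> m = m'"
    by (auto simp: F_def a_def b_def)
  have pw: "cinner M (h k \<omega>) (\<lambda>i. \<Sum>k'=1..K. complex_of_real (s k') * w k' \<omega> i)
        = (\<Sum>m\<in>F. c m * (cnj (Xc h z (a m) \<omega>) * Xc h z (b m) \<omega>))" for \<omega>
  proof -
    have "cinner M (h k \<omega>) (\<lambda>i. \<Sum>k'=1..K. complex_of_real (s k') * w k' \<omega> i)
        = (\<Sum>i<M. \<Sum>k'\<in>{1..K}. cnj (h k \<omega> i) * (complex_of_real (s k') * w k' \<omega> i))"
      by (simp add: cinner_def sum_distrib_left)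
    also have "\<dots> = (\<Sum>i<M. \<Sum>k'\<in>{1..K}. c (i,k',0) * (cnj (Xc h z (a (i,k',0)) \<omega>) * Xc h z (b (i,k',0)) \<omega>)
                          + c (i,k',1) * (cnj (Xc h z (a (i,k',1)) \<omega>) * Xc h z (b (i,k',1)) \<omega>))"
    proof (intro sum.cong refl)
      fix i k' assume i: "i \<in> {..<M}" and k': "k' \<in> {1..K}"
      have N: "NN k' \<noteq> 0" using NN_pos[OF k'] by simp
      show "cnj (h k \<omega> i) * (complex_of_real (s k') * w k' \<omega> i) =
         c (i,k',0) * (cnj (Xc h z (a (i,k',0)) \<omega>) * Xc h z (b (i,k',0)) \<omega>)
         + c (i,k',1) * (cnj (Xc h z (a (i,k',1)) \<omega>) * Xc h z (b (i,k',1)) \<omega>)"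
        using i k' N by (simp add: w_eq hhat_eq c_def a_def b_def Xc_def field_simps)
    qed
    also have "\<dots> = (\<Sum>m\<in>F. c m * (cnj (Xc h z (a m) \<omega>) * Xc h z (b m) \<omega>))"
      unfolding F_def by (rule sum_F[symmetric])
    finally show ?thesis .
  qed
  have q4: "(\<integral>\<omega>. (cmod (\<Sum>m\<in>F. c m * (cnj (Xc h z (a m) \<omega>) * Xc h z (b m) \<omega>)))^2 \<partial>P)
       = (cmod (\<Sum>m\<in>F. if a m = b m then c m * complex_of_real (vv beta sigma2 (a m)) else 0))^2
         + (\<Sum>m\<in>F. (cmod (c m))^2 * vv beta sigma2 (a m) * vv beta sigma2 (b m))"
    by (rule cg.quad4[OF _ ab inj]) (simp add: F_def)
  have T: "(\<Sum>m\<in>F. if a m = b m then c m * complex_of_real (vv beta sigma2 (a m)) else 0)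
      = complex_of_real (real M * (s k / NN k * A k * beta k))"
  proof -
    have "(\<Sum>m\<in>F. if a m = b m then c m * complex_of_real (vv beta sigma2 (a m)) else 0)
       = (\<Sum>i<M. \<Sum>k'\<in>{1..K}. if k' = k then complex_of_real (s k / NN k * A k * beta k) else 0)"
      unfolding F_def sum_F by (intro sum.cong refl) (auto simp: a_def b_def c_def vv_def)
    also have "\<dots> = complex_of_real (real M * (s k / NN k * A k * beta k))"
      using k by (simp add: sum.delta')
    finally show ?thesis .
  qed
  have T2: "(cmod (complex_of_real (real M * (s k / NN k * A k * beta k))))^2 = real M * (s k)^2 * (beta k - ee k)"
  proof -
    have "(cmod (complex_of_real (real M * (s k / NN k * A k * beta k))))^2 = (real M)^2 * (s k)^2 * (beta k - ee k)^2 / (NN k)^2"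
      by (simp only: norm_of_real power2_abs) (simp add: ee_eq[OF k] power_mult_distrib power_divide mult_ac)
    also have "(NN k)^2 = real M * (beta k - ee k)" using be_pos[OF k] by (simp add: NN_def)
    also have "(real M)^2 * (s k)^2 * (beta k - ee k)^2 / (real M * (beta k - ee k)) = real M * (s k)^2 * (beta k - ee k)"
      using be_pos[OF k] Mpos by (simp add: power2_eq_square)
    finally show ?thesis .
  qed
  have S2: "(\<Sum>m\<in>F. (cmod (c m))^2 * vv beta sigma2 (a m) * vv beta sigma2 (b m)) = beta k * (\<Sum>k'=1..K. (s k')^2)"
  proof -
    have "(\<Sum>m\<in>F. (cmod (c m))^2 * vv beta sigma2 (a m) * vv beta sigma2 (b m))
        = (\<Sum>i<M. \<Sum>k'\<in>{1..K}. beta k * (s k')^2 / real M)"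
      unfolding F_def sum_F
    proof (intro sum.cong refl)
      fix i k' assume i: "i \<in> {..<M}" and k': "k' \<in> {1..K}"
      have N2: "(NN k')^2 = real M * (beta k' - ee k')" using be_pos[OF k'] by (simp add: NN_def)
      have "(cmod (c (i, k', 0)))\<^sup>2 * vv beta sigma2 (a (i, k', 0)) * vv beta sigma2 (b (i, k', 0)) +
            (cmod (c (i, k', 1)))\<^sup>2 * vv beta sigma2 (a (i, k', 1)) * vv beta sigma2 (b (i, k', 1))
          = beta k * (s k')^2 / (NN k')^2 * ((A k')^2 * beta k' + (cmod (Bc k'))^2 * sigma2)"
      proof -
        have c0: "(cmod (c (i,k',0)))^2 = (s k'/NN k')^2 * (A k')^2"
          by (simp add: c_def norm_mult power_mult_distrib power_divide del: of_real_divide of_real_mult)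
        have c1: "(cmod (c (i,k',1)))^2 = (s k'/NN k')^2 * (cmod (Bc k'))^2"
          using dd i by (simp add: c_def norm_mult power_mult_distrib power_divide del: of_real_divide of_real_mult)
        show ?thesis unfolding c0 c1 by (simp add: a_def b_def vv_def power_divide add_divide_distrib algebra_simps)
      qed
      also have "\<dots> = beta k * (s k')^2 / real M"
        unfolding var_eq[OF k'] N2 using be_pos[OF k'] Mpos by (simp add: field_simps)
      finally show "(cmod (c (i, k', 0)))\<^sup>2 * vv beta sigma2 (a (i, k', 0)) * vv beta sigma2 (b (i, k', 0)) +
            (cmod (c (i, k', 1)))\<^sup>2 * vv beta sigma2 (a (i, k', 1)) * vv beta sigma2 (b (i, k', 1))
          = beta k * (s k')^2 / real M" .
    qed
    also have "\<dots> = beta k * (\<Sum>k'=1..K. (s k')^2)"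
    proof -
      have "(\<Sum>i<M. \<Sum>k'\<in>{1..K}. beta k * (s k')^2 / real M) = real M * (\<Sum>k'\<in>{1..K}. beta k * (s k')^2 / real M)"
        by simp
      also have "\<dots> = (\<Sum>k'\<in>{1..K}. beta k * (s k')^2)"
        using Mpos by (simp add: sum_distrib_left)
      finally show ?thesis by (simp add: sum_distrib_left)
    qed
    finally show ?thesis .
  qed
  show ?thesis unfolding pw q4 T T2 S2 ..
qed


lemma g_formula:
  assumes k: "k \<in> {1..K}"
  shows "(\<integral>\<omega>. cinner M (h k \<omega>) (w k \<omega>) \<partial>P) = complex_of_real (NN k)"
proof -
  have J0: "(0, k, i) \<in> JJ K M" and J1: "(1, k, i) \<in> JJ K M" if "i < M" for i
    using k that by (auto simp: JJ_def)
  have N: "NN k \<noteq> 0" using NN_pos[OF k] by simp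
  have pw: "cinner M (h k \<omega>) (w k \<omega>) = (\<Sum>i<M. complex_of_real (A k / NN k) * (cnj (Xc h z (0,k,i) \<omega>) * Xc h z (0,k,i) \<omega>)
        + (Bc k * cnj (d i) / complex_of_real (NN k)) * (cnj (Xc h z (0,k,i) \<omega>) * Xc h z (1,k,i) \<omega>))" for \<omega>
    unfolding cinner_def
    by (intro sum.cong refl) (use k N in \<open>simp add: w_eq hhat_eq Xc_def field_simps\<close>)
  have "(\<integral>\<omega>. cinner M (h k \<omega>) (w k \<omega>) \<partial>P) = (\<Sum>i<M. complex_of_real (A k / NN k) * complex_of_real (beta k))"
    unfolding pw
  proof -
    let ?f = "\<lambda>i \<omega>. complex_of_real (A k / NN k) * (cnj (Xc h z (0,k,i) \<omega>) * Xc h z (0,k,i) \<omega>)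
        + (Bc k * cnj (d i) / complex_of_real (NN k)) * (cnj (Xc h z (0,k,i) \<omega>) * Xc h z (1,k,i) \<omega>)"
    have i1: "integrable P (\<lambda>\<omega>. complex_of_real (A k / NN k) * (cnj (Xc h z (0,k,i) \<omega>) * Xc h z (0,k,i) \<omega>))"
      if i: "i < M" for i
      by (rule integrable_mult_right) (rule cg.second(1)[OF J0[OF i] J0[OF i]])
    have i2: "integrable P (\<lambda>\<omega>. (Bc k * cnj (d i) / complex_of_real (NN k)) * (cnj (Xc h z (0,k,i) \<omega>) * Xc h z (1,k,i) \<omega>))"
      if i: "i < M" for i
      by (rule integrable_mult_right) (rule cg.second(1)[OF J0[OF i] J1[OF i]])
    have "(\<integral>\<omega>. (\<Sum>i<M. ?f i \<omega>) \<partial>P) = (\<Sum>i<M. \<integral>\<omega>. ?f i \<omega> \<partial>P)"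
      by (rule Bochner_Integration.integral_sum) (rule Bochner_Integration.integrable_add[OF i1 i2]; simp)
    also have "\<dots> = (\<Sum>i<M. complex_of_real (A k / NN k) * complex_of_real (beta k))"
    proof (intro sum.cong refl)
      fix i assume i: "i \<in> {..<M}"
      show "(\<integral>\<omega>. ?f i \<omega> \<partial>P) = complex_of_real (A k / NN k) * complex_of_real (beta k)"
        using i1[of i] i2[of i] i
        apply (subst Bochner_Integration.integral_add)
        using J0 J1 i by (simp_all add: cg.second(2) vv_def)
    qed
    finally show "(\<integral>\<omega>. (\<Sum>i<M. ?f i \<omega>) \<partial>P) = (\<Sum>i<M. complex_of_real (A k / NN k) * complex_of_real (beta k))" .
  qed
  also have "\<dots> = complex_of_real (real M * A k * beta k / NN k)" by simp
  also have "real M * A k * beta k / NN k = NN k"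
  proof -
    have "real M * A k * beta k = (NN k)^2" using be_pos[OF k] by (simp add: NN_def ee_eq[OF k] mult_ac)
    then show ?thesis using N by (simp add: power2_eq_square)
  qed
  finally show ?thesis .
qed

lemma q_formula:
  assumes k: "k \<in> {1..K}" and k': "k' \<in> {1..K}"
  shows "(\<integral>\<omega>. (cmod (cinner M (h k \<omega>) (w k' \<omega>)))\<^sup>2 \<partial>P)
       = real M * (if k' = k then 1 else 0) * (beta k - ee k) + beta k"
proof -
  let ?s = "\<lambda>j. if j = k' then 1 else 0 :: real"
  have sd: "(\<Sum>j=1..K. complex_of_real (?s j) * x j) = x k'" for x :: "nat \<Rightarrow> complex"
  proof -
    have "(\<Sum>j=1..K. complex_of_real (?s j) * x j) = (\<Sum>j=1..K. if j = k' then x j else 0)"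
      by (rule sum.cong) auto
    also have "\<dots> = x k'" using k' by (simp add: sum.delta')
    finally show ?thesis .
  qed
  have "(\<lambda>\<omega>. cinner M (h k \<omega>) (w k' \<omega>)) = (\<lambda>\<omega>. cinner M (h k \<omega>) (\<lambda>i. \<Sum>j=1..K. complex_of_real (?s j) * w j \<omega> i))"
    by (simp only: sd)
  then have "(\<integral>\<omega>. (cmod (cinner M (h k \<omega>) (w k' \<omega>)))\<^sup>2 \<partial>P)
      = (\<integral>\<omega>. (cmod (cinner M (h k \<omega>) (\<lambda>i. \<Sum>j=1..K. complex_of_real (?s j) * w j \<omega> i)))\<^sup>2 \<partial>P)"
    by (simp only: sd)
  also have "\<dots> = real M * (?s k)^2 * (beta k - ee k) + beta k * (\<Sum>j=1..K. (?s j)^2)"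
    by (rule energy_formula[OF k])
  also have "\<dots> = real M * (if k' = k then 1 else 0) * (beta k - ee k) + beta k"
  proof -
    have "(\<Sum>j=1..K. (?s j)^2) = (\<Sum>j=1..K. if j = k' then 1 else 0)"
      by (rule sum.cong) auto
    also have "\<dots> = 1" using k' by (simp add: sum.delta')
    finally show ?thesis by auto
  qed
  finally show ?thesis .
qed

end

theorem theorem3:
  fixes P :: "'a measure"
    and M K T TD :: nat
    and Phi :: complex and rho sigma2 rhoRF etaEH :: real
    and d :: "nat \<Rightarrow> complex"
    and beta pp ps sRF ss alpha :: "nat \<Rightarrow> real"
    and h z :: "nat \<Rightarrow> 'a \<Rightarrow> nat \<Rightarrow> complex"
  assumes "prob_space P"
    and "M > 0" and "K > 0" and "T > 0"
    and "Phi \<noteq> 0" and "rho > 0" and "sigma2 > 0"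
    and "\<forall>i<M. cmod (d i) = 1"
    and "\<forall>k\<in>{1..K}. beta k > 0 \<and> pp k > 0"
    and "rhoRF > 0"
    and "\<forall>k\<in>{1..K}. ps k \<ge> 0 \<and> sRF k > 0 \<and> ss k > 0 \<and> 0 \<le> alpha k \<and> alpha k \<le> 1"
    and "0 < etaEH" and "etaEH \<le> 1"
    \<comment> \<open>h_k ~ CN(0, beta_k I_M), z_k ~ CN(0, sigma^2 I_M), all mutually independent\<close>
    and "\<forall>k\<in>{1..K}. \<forall>i<M.
           distributed P lborel (\<lambda>\<omega>. Re (h k \<omega> i)) (normal_density 0 (sqrt (beta k / 2))) \<and>
           distributed P lborel (\<lambda>\<omega>. Im (h k \<omega> i)) (normal_density 0 (sqrt (beta k / 2))) \<and>
           distributed P lborel (\<lambda>\<omega>. Re (z k \<omega> i)) (normal_density 0 (sqrt (sigma2 / 2))) \<and>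
           distributed P lborel (\<lambda>\<omega>. Im (z k \<omega> i)) (normal_density 0 (sqrt (sigma2 / 2)))"
    and "prob_space.indep_vars P (\<lambda>_. borel) (gauss_coords h z) (coord_index K M)"
    and "k \<in> {1..K}"
  shows
    "let tau = real K;
         hhat = (\<lambda>k' \<omega>. chan_est rho tau (pp k') (beta k') Phi sigma2 d (h k' \<omega>) (z k' \<omega>));
         w = mrt_precoder P M hhat;
         e = est_err rho tau (pp k) (beta k) Phi sigma2
     in harvested_energy P M K TD T etaEH alpha rhoRF ps h w k
          \<ge> real TD / real T * etaEH * (1 - alpha k) *
             (rhoRF * ps k * real M * (beta k - e) + beta k * (\<Sum>k'=1..K. rhoRF * ps k'))
      \<and> rate_D P M K TD T alpha rhoRF ps sRF ss h w k
          \<ge> real TD / real T * log 2 (1 + rhoRF * ps k * alpha k * real M * (beta k - e) /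
               (alpha k * beta k * (\<Sum>k'=1..K. rhoRF * ps k') + alpha k * sRF k + ss k))"
proof -
  interpret swipt P M K Phi rho sigma2 d beta pp h z
    by (rule swipt.intro[OF assms(1,2,3,5,6,7,8,9,14,15)])
  have k: "k \<in> {1..K}" using assms by simp
  have ps: "\<And>k'. k' \<in> {1..K} \<Longrightarrow> ps k' \<ge> 0" using assms by auto
  have rhoRF: "rhoRF > 0" using assms by simp
  have hh: "(\<lambda>k' \<omega>. chan_est rho (real K) (pp k') (beta k') Phi sigma2 d (h k' \<omega>) (z k' \<omega>)) = hhat"
    by (simp add: hhat_def tau_def)
  have ee: "est_err rho (real K) (pp k) (beta k) Phi sigma2 = ee k"
    by (simp add: ee_def tau_def)
  have ww: "mrt_precoder P M hhat = w" by (simp add: w_def)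
  define S where "S = (\<Sum>k'=1..K. rhoRF * ps k')"
  have EN: "harvested_energy P M K TD T etaEH alpha rhoRF ps h w k
      = real TD / real T * etaEH * (1 - alpha k) * (rhoRF * ps k * real M * (beta k - ee k) + beta k * S)"
  proof -
    have "(\<integral>\<omega>. (cmod (cinner M (h k \<omega>) (\<lambda>i. \<Sum>k'=1..K. complex_of_real (sqrt (rhoRF * ps k')) * w k' \<omega> i)))\<^sup>2 \<partial>P)
       = real M * (sqrt (rhoRF * ps k))^2 * (beta k - ee k) + beta k * (\<Sum>k'=1..K. (sqrt (rhoRF * ps k'))^2)"
      by (rule energy_formula[OF k])
    also have "(\<Sum>k'=1..K. (sqrt (rhoRF * ps k'))^2) = S"
      unfolding S_def using ps rhoRF by (intro sum.cong refl) simp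
    also have "(sqrt (rhoRF * ps k))^2 = rhoRF * ps k" using ps[OF k] rhoRF by simp
    finally show ?thesis by (simp add: harvested_energy_def mult_ac)
  qed
  have g: "(cmod (\<integral>\<omega>. cinner M (h k \<omega>) (w k \<omega>) \<partial>P))^2 = real M * (beta k - ee k)"
    using g_formula[OF k] NN_pos[OF k] be_pos[OF k] by (simp add: NN_def)
  have qs: "(\<Sum>k'=1..K. rhoRF * ps k' * (\<integral>\<omega>. (cmod (cinner M (h k \<omega>) (w k' \<omega>)))\<^sup>2 \<partial>P))
      = rhoRF * ps k * (real M * (beta k - ee k)) + beta k * S"
  proof -
    have "(\<Sum>k'=1..K. rhoRF * ps k' * (\<integral>\<omega>. (cmod (cinner M (h k \<omega>) (w k' \<omega>)))\<^sup>2 \<partial>P))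
      = (\<Sum>k'=1..K. (if k' = k then rhoRF * ps k * (real M * (beta k - ee k)) else 0) + beta k * (rhoRF * ps k'))"
      by (intro sum.cong refl) (auto simp: q_formula[OF k] algebra_simps)
    also have "\<dots> = rhoRF * ps k * (real M * (beta k - ee k)) + beta k * S"
      using k by (simp add: sum.distrib sum.delta' S_def sum_distrib_left)
    finally show ?thesis .
  qed
  have SINR: "SINR_D P M K alpha rhoRF ps sRF ss h w k
      = rhoRF * ps k * alpha k * real M * (beta k - ee k) / (alpha k * beta k * S + alpha k * sRF k + ss k)"
    unfolding SINR_D_def Let_def g qs by (simp add: algebra_simps)
  have RATE: "rate_D P M K TD T alpha rhoRF ps sRF ss h w k
      = real TD / real T * log 2 (1 + rhoRF * ps k * alpha k * real M * (beta k - ee k) / (alpha k * beta k * S + alpha k * sRF k + ss k))"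
    unfolding rate_D_def SINR ..
  show ?thesis
    unfolding Let_def hh ww ee EN RATE S_def[symmetric] by simp
qed

end
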